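(* Let $\lambda/\mu$ be a connected r-shape with column flags $\mathbf a,\mathbf b$, and let $\Theta=(\theta_1,\ldots,\theta_k)$ be an outer ribbon decomposition of $\lambda/\mu$. For every $i,j$ such that $\theta_i\#\theta_j$ is defined and nonempty, the induced ribbon flags $\mathbf a^{ij},\mathbf b^{ij}$ are column flags for the r-shape $\theta_i\#\theta_j$.
   Context: Young diagrams in English notation; $\mathrm{row}(\gamma),\mathrm{col}(\gamma)$ the row and column of a cell. An r-shape is $(\lambda/\mu,r)$, $r\in\mathbb Z$, with shifted contents $c(i,j)=j-i+r-1+\lambda'_1$ (bottom-left cell content $r$); connected means edgewise connected diagram. Column flags for an r-shape $\kappa/\nu$ with $N\ge\kappa_1$: $\mathbf a,\mathbf b\in\mathbb Z^N$ with $a_i-a_{i+1}\le\nu'_i-\nu'_{i+1}+1$ and $b_i-b_{i+1}\le\kappa'_i-\kappa'_{i+1}+1$ whenever $\nu'_i<\kappa'_{i+1}$. A ribbon is an edgewise connected skew diagram with no $2\times2$ block; head = bottom-left cell, tail = top-right cell. A cell of $\lambda/\mu$ is on the top (right, bottom, left) perimeter if the cell directly above (right, below, left) is not in $\lambda/\mu$. An outer ribbon decomposition $(\theta_1,\ldots,\theta_k)$ of $\lambda/\mu$ partitions its cells into ribbons with each head on the left or bottom perimeter and each tail on the top or right perimeter. A cell $\gamma\in\theta_i$ goes up if the cell directly above is in $\theta_i$ or $\gamma$ is the tail of $\theta_i$ on the top perimeter; goes right if the cell directly to its right is in $\theta_i$ or $\gamma$ is the tail of $\theta_i$ on the right perimeter;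 the top-right cell of $\lambda/\mu$ (in $\theta_i$) goes up if the cell directly below is in $\theta_i$ and right if the cell directly to its left is in $\theta_i$. All cells of a given content go in the same direction. The cutting strip is the ribbon whose cells have exactly the contents occurring in $\lambda/\mu$, with the cell of content $c+1$ directly above (resp. right of) that of content $c$ when the cells of content $c$ go up (resp. right). $\Theta(p,q)$ is its sub-ribbon of contents in $[p,q]$, an r-shape with root content $p$; it is $\varnothing$ if $p=q+1$ and undefined if $p>q+1$. $\theta_i\#\theta_j=\Theta(c(\delta_i),c(\gamma_j))$ with $\delta_i$ the head of $\theta_i$, $\gamma_j$ the tail of $\theta_j$. Canonical decomposition: $\theta=\rho_1\to\cdots\to\rho_K$ with $\rho_r$ the maximal vertical strips (column segments) of $\theta$ from left to right. Induced ribbon flags of $\theta_i\#\theta_j=\rho_1\to\cdots\to\rho_K$: with $\delta_r,\gamma_r$ the bottom and top cells of $\rho_r$, $M_r$ the rightmost cell of $\lambda/\mu$ of content $c(\delta_r)$, $m_r$ the leftmost cell of $\lambda/\mu$ of content $c(\gamma_r)$ (rows/columns measured in $\lambda/\mu$): $a^{ij}_r=a_{\mathrm{col}(m_r)}-(\mu'_{\mathrm{col}(m_r)}+1)+\mathrm{row}(m_r)$, $b^{ij}_r=b_{\mathrm{col}(M_r)}-\lambda'_{\mathrm{col}(M_r)}+\mathrm{row}(M_r)$. *)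

theory Defs
  imports Main
begin

definition partition :: "nat list \<Rightarrow> bool" where
  "partition lam \<longleftrightarrow> sorted_wrt (\<ge>) lam"

definition part_at :: "nat list \<Rightarrow> nat \<Rightarrow> nat" where
  "part_at lam i = (if 1 \<le> i \<and> i \<le> length lam then lam ! (i - 1) else 0)"

(* conjugate partition: lambda'_j = number of rows of length >= j  (used for j >= 1) *)
definition conj_part :: "nat list \<Rightarrow> nat \<Rightarrow> nat" where
  "conj_part lam j = card {i. 1 \<le> i \<and> i \<le> length lam \<and> j \<le> part_at lam i}"

definition skew :: "nat list \<Rightarrow> nat list \<Rightarrow> (nat \<times> nat) set" where
  "skew lam mu = {(i, j). 1 \<le> i \<and> 1 \<le> j \<and> part_at mu i < j \<and> j \<le> part_at lam i}"

definition content :: "nat list \<Rightarrow> int \<Rightarrow> nat \<times> nat \<Rightarrow> int" where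
  "content lam r c = int (snd c) - int (fst c) + r - 1 + int (conj_part lam 1)"

definition adjacent :: "nat \<times> nat \<Rightarrow> nat \<times> nat \<Rightarrow> bool" where
  "adjacent x y \<longleftrightarrow>
     (fst x = fst y \<and> (snd y = snd x + 1 \<or> snd x = snd y + 1)) \<or>
     (snd x = snd y \<and> (fst y = fst x + 1 \<or> fst x = fst y + 1))"

definition edge_connected :: "(nat \<times> nat) set \<Rightarrow> bool" where
  "edge_connected S \<longleftrightarrow> S \<noteq> {} \<and>
     (\<forall>x\<in>S. \<forall>y\<in>S. (x, y) \<in> {(u, v). u \<in> S \<and> v \<in> S \<and> adjacent u v}\<^sup>*)"

(* a connected r-shape lam/mu (the integer r plays no role in this predicate) *)
definition connected_rshape :: "nat list \<Rightarrow> nat list \<Rightarrow> bool" where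
  "connected_rshape lam mu \<longleftrightarrow> partition lam \<and> partition mu \<and>
     (\<forall>i. part_at mu i \<le> part_at lam i) \<and> edge_connected (skew lam mu)"

(* column flags a, b in Z^N (indices 1..N) for the r-shape kappa/nu *)
definition column_flags :: "nat list \<Rightarrow> nat list \<Rightarrow> nat \<Rightarrow> (nat \<Rightarrow> int) \<Rightarrow> (nat \<Rightarrow> int) \<Rightarrow> bool" where
  "column_flags kappa nu N a b \<longleftrightarrow> part_at kappa 1 \<le> N \<and>
     (\<forall>i. 1 \<le> i \<and> i < N \<and> conj_part nu i < conj_part kappa (i + 1) \<longrightarrow>
        a i - a (i + 1) \<le> int (conj_part nu i) - int (conj_part nu (i + 1)) + 1 \<and>
        b i - b (i + 1) \<le> int (conj_part kappa i) - int (conj_part kappa (i + 1)) + 1)"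

definition is_skew_diagram :: "(nat \<times> nat) set \<Rightarrow> bool" where
  "is_skew_diagram S \<longleftrightarrow> (\<exists>kappa nu. partition kappa \<and> partition nu \<and> S = skew kappa nu)"

definition is_ribbon :: "(nat \<times> nat) set \<Rightarrow> bool" where
  "is_ribbon S \<longleftrightarrow> is_skew_diagram S \<and> edge_connected S \<and>
     \<not> (\<exists>i j. (i, j) \<in> S \<and> (i + 1, j) \<in> S \<and> (i, j + 1) \<in> S \<and> (i + 1, j + 1) \<in> S)"

definition head :: "(nat \<times> nat) set \<Rightarrow> nat \<times> nat" where
  "head S = (THE x. x \<in> S \<and> (\<forall>y\<in>S. fst y \<le> fst x) \<and> (\<forall>y\<in>S. fst y = fst x \<longrightarrow> snd x \<le> snd y))"

definition tail :: "(nat \<times> nat) set \<Rightarrow> nat \<times> nat" where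
  "tail S = (THE x. x \<in> S \<and> (\<forall>y\<in>S. fst x \<le> fst y) \<and> (\<forall>y\<in>S. fst y = fst x \<longrightarrow> snd y \<le> snd x))"

(* perimeters of a set of cells S (cells have coordinates >= 1) *)
definition on_top :: "(nat \<times> nat) set \<Rightarrow> nat \<times> nat \<Rightarrow> bool" where
  "on_top S c \<longleftrightarrow> (fst c - 1, snd c) \<notin> S"
definition on_bottom :: "(nat \<times> nat) set \<Rightarrow> nat \<times> nat \<Rightarrow> bool" where
  "on_bottom S c \<longleftrightarrow> (fst c + 1, snd c) \<notin> S"
definition on_left :: "(nat \<times> nat) set \<Rightarrow> nat \<times> nat \<Rightarrow> bool" where
  "on_left S c \<longleftrightarrow> (fst c, snd c - 1) \<notin> S"
definition on_right :: "(nat \<times> nat) set \<Rightarrow> nat \<times> nat \<Rightarrow> bool" where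
  "on_right S c \<longleftrightarrow> (fst c, snd c + 1) \<notin> S"

(* outer ribbon decomposition (theta_1,...,theta_k) = list thetas (0-indexed) *)
definition outer_ribbon_decomp :: "nat list \<Rightarrow> nat list \<Rightarrow> (nat \<times> nat) set list \<Rightarrow> bool" where
  "outer_ribbon_decomp lam mu thetas \<longleftrightarrow>
     (\<forall>th\<in>set thetas. is_ribbon th \<and> th \<subseteq> skew lam mu \<and>
        (on_left (skew lam mu) (head th) \<or> on_bottom (skew lam mu) (head th)) \<and>
        (on_top (skew lam mu) (tail th) \<or> on_right (skew lam mu) (tail th))) \<and>
     (\<forall>i<length thetas. \<forall>j<length thetas. i \<noteq> j \<longrightarrow> thetas ! i \<inter> thetas ! j = {}) \<and>
     \<Union> (set thetas) = skew lam mu"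

definition goes_up :: "nat list \<Rightarrow> nat list \<Rightarrow> (nat \<times> nat) set \<Rightarrow> nat \<times> nat \<Rightarrow> bool" where
  "goes_up lam mu th g \<longleftrightarrow>
     (if g = tail (skew lam mu) then (fst g + 1, snd g) \<in> th
      else (fst g - 1, snd g) \<in> th \<or> (g = tail th \<and> on_top (skew lam mu) g))"

definition goes_right :: "nat list \<Rightarrow> nat list \<Rightarrow> (nat \<times> nat) set \<Rightarrow> nat \<times> nat \<Rightarrow> bool" where
  "goes_right lam mu th g \<longleftrightarrow>
     (if g = tail (skew lam mu) then (fst g, snd g - 1) \<in> th
      else (fst g, snd g + 1) \<in> th \<or> (g = tail th \<and> on_right (skew lam mu) g))"

definition content_goes_up :: "nat list \<Rightarrow> nat list \<Rightarrow> int \<Rightarrow> (nat \<times> nat) set list \<Rightarrow> int \<Rightarrow> bool" where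
  "content_goes_up lam mu r thetas c \<longleftrightarrow>
     (\<exists>th\<in>set thetas. \<exists>g\<in>th. content lam r g = c \<and> goes_up lam mu th g)"

(* position (row, column) in Z^2 of the n-th cell of a strip starting at content c0 at (0,0):
   the next cell is directly above if the current content goes up, otherwise to the right *)
fun strip_pos :: "(int \<Rightarrow> bool) \<Rightarrow> int \<Rightarrow> nat \<Rightarrow> int \<times> int" where
  "strip_pos up c0 0 = (0, 0)"
| "strip_pos up c0 (Suc n) =
     (if up (c0 + int n) then (fst (strip_pos up c0 n) - 1, snd (strip_pos up c0 n))
      else (fst (strip_pos up c0 n), snd (strip_pos up c0 n) + 1))"

definition min_content :: "nat list \<Rightarrow> nat list \<Rightarrow> int \<Rightarrow> int" where
  "min_content lam mu r = Min (content lam r ` skew lam mu)"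

definition cut_cell :: "nat list \<Rightarrow> nat list \<Rightarrow> int \<Rightarrow> (nat \<times> nat) set list \<Rightarrow> int \<Rightarrow> int \<times> int" where
  "cut_cell lam mu r thetas c =
     strip_pos (content_goes_up lam mu r thetas) (min_content lam mu r) (nat (c - min_content lam mu r))"

definition Theta_seg :: "nat list \<Rightarrow> nat list \<Rightarrow> int \<Rightarrow> (nat \<times> nat) set list \<Rightarrow> int \<Rightarrow> int \<Rightarrow> (int \<times> int) set" where
  "Theta_seg lam mu r thetas p q = cut_cell lam mu r thetas ` {p..q}"

definition normalize :: "(int \<times> int) set \<Rightarrow> (nat \<times> nat) set" where
  "normalize S = (\<lambda>(x, y). (nat (x - Min (fst ` S) + 1), nat (y - Min (snd ` S) + 1))) ` S"

(* the skew shape kappa/nu (without empty rows) whose diagram is the normalized set S *)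
definition shape_rows :: "(nat \<times> nat) set \<Rightarrow> nat" where
  "shape_rows S = Max (fst ` S)"
definition shape_kappa :: "(nat \<times> nat) set \<Rightarrow> nat list" where
  "shape_kappa S = map (\<lambda>i. Max {j. (i, j) \<in> S}) [1..<shape_rows S + 1]"
definition shape_nu :: "(nat \<times> nat) set \<Rightarrow> nat list" where
  "shape_nu S = map (\<lambda>i. Min {j. (i, j) \<in> S} - 1) [1..<shape_rows S + 1]"
definition shape_cols :: "(nat \<times> nat) set \<Rightarrow> nat" where
  "shape_cols S = Max (snd ` S)"

definition hash_p :: "nat list \<Rightarrow> int \<Rightarrow> (nat \<times> nat) set list \<Rightarrow> nat \<Rightarrow> int" where
  "hash_p lam r thetas i = content lam r (head (thetas ! i))"
definition hash_q :: "nat list \<Rightarrow> int \<Rightarrow> (nat \<times> nat) set list \<Rightarrow> nat \<Rightarrow> int" where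
  "hash_q lam r thetas j = content lam r (tail (thetas ! j))"

(* the diagram of the r-shape theta_i # theta_j = Theta(p,q), with root content p *)
definition hash_cells :: "nat list \<Rightarrow> nat list \<Rightarrow> int \<Rightarrow> (nat \<times> nat) set list \<Rightarrow> nat \<Rightarrow> nat \<Rightarrow> (nat \<times> nat) set" where
  "hash_cells lam mu r thetas i j =
     normalize (Theta_seg lam mu r thetas (hash_p lam r thetas i) (hash_q lam r thetas j))"

definition rightmost_of :: "nat list \<Rightarrow> nat list \<Rightarrow> int \<Rightarrow> int \<Rightarrow> nat \<times> nat" where
  "rightmost_of lam mu r c = (THE x. x \<in> skew lam mu \<and> content lam r x = c \<and>
     (\<forall>y\<in>skew lam mu. content lam r y = c \<longrightarrow> snd y \<le> snd x))"
definition leftmost_of :: "nat list \<Rightarrow> nat list \<Rightarrow> int \<Rightarrow> int \<Rightarrow> nat \<times> nat" where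
  "leftmost_of lam mu r c = (THE x. x \<in> skew lam mu \<and> content lam r x = c \<and>
     (\<forall>y\<in>skew lam mu. content lam r y = c \<longrightarrow> snd x \<le> snd y))"

(* induced ribbon flags a^{ij}_rho, b^{ij}_rho, rho = 1..K.
   delta_rho / gamma_rho = bottom / top cell of column rho of the ribbon; their contents are
   taken in the r-shape (kappa/nu, p). *)
definition induced_a :: "nat list \<Rightarrow> nat list \<Rightarrow> int \<Rightarrow> (nat \<times> nat) set list \<Rightarrow> (nat \<Rightarrow> int) \<Rightarrow> nat \<Rightarrow> nat \<Rightarrow> nat \<Rightarrow> int" where
  "induced_a lam mu r thetas a i j rho =
     (let S = hash_cells lam mu r thetas i j;
          gam = (Min {x. (x, rho) \<in> S}, rho);
          m = leftmost_of lam mu r (content (shape_kappa S) (hash_p lam r thetas i) gam)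
      in a (snd m) - (int (conj_part mu (snd m)) + 1) + int (fst m))"

definition induced_b :: "nat list \<Rightarrow> nat list \<Rightarrow> int \<Rightarrow> (nat \<times> nat) set list \<Rightarrow> (nat \<Rightarrow> int) \<Rightarrow> nat \<Rightarrow> nat \<Rightarrow> nat \<Rightarrow> int" where
  "induced_b lam mu r thetas b i j rho =
     (let S = hash_cells lam mu r thetas i j;
          del = (Max {x. (x, rho) \<in> S}, rho);
          M = rightmost_of lam mu r (content (shape_kappa S) (hash_p lam r thetas i) del)
      in b (snd M) - int (conj_part lam (snd M)) + int (fst M))"

end

theory Submission
  imports Defs
begin


lemma part_mono:
  assumes "partition lam" "1 \<le> i" "i \<le> i'"
  shows "part_at lam i' \<le> part_at lam i"
proof (cases "i' \<le> length lam")
  case True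
  show ?thesis
  proof (cases "i = i'")
    case False
    then have "i - 1 < i' - 1" "i' - 1 < length lam" using True assms by auto
    then have "lam ! (i - 1) \<ge> lam ! (i' - 1)"
      using assms(1) sorted_wrt_nth_less[of "(\<ge>)" lam "i-1" "i'-1"] unfolding partition_def
      by blast
    then show ?thesis using True assms unfolding part_at_def by simp
  qed simp
next
  case False
  then show ?thesis unfolding part_at_def by simp
qed

lemma down_closed_card:
  fixes A :: "nat set"
  assumes "finite A" "\<forall>i\<in>A. 1 \<le> i" "\<forall>i\<in>A. \<forall>i'. 1 \<le> i' \<and> i' \<le> i \<longrightarrow> i' \<in> A"
  shows "A = {1..card A}"
proof (cases "A = {}")
  case True then show ?thesis by simp
next
  case False
  have m: "Max A \<in> A" using Max_in[OF assms(1) False] .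
  have e: "A = {1..Max A}"
  proof
    show "A \<subseteq> {1..Max A}" using assms(2) Max_ge[OF assms(1)] by auto
    show "{1..Max A} \<subseteq> A" using assms(3) m by auto
  qed
  then have "card A = Max A" by (metis card_atLeastAtMost diff_Suc_1)
  then show ?thesis using e by simp
qed

lemma conj_iff:
  assumes "partition lam" "1 \<le> t" "1 \<le> i"
  shows "t \<le> part_at lam i \<longleftrightarrow> i \<le> conj_part lam t"
proof -
  let ?A = "{i. 1 \<le> i \<and> i \<le> length lam \<and> t \<le> part_at lam i}"
  have fin: "finite ?A" by (rule finite_subset[of _ "{1..length lam}"]) auto
  have dc: "\<forall>i\<in>?A. \<forall>i'. 1 \<le> i' \<and> i' \<le> i \<longrightarrow> i' \<in> ?A"
  proof (intro ballI allI impI)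
    fix i i' assume "i \<in> ?A" "1 \<le> i' \<and> i' \<le> i"
    then show "i' \<in> ?A" using part_mono[OF assms(1), of i' i] by auto
  qed
  have A: "?A = {1..card ?A}" by (rule down_closed_card[OF fin _ dc]) auto
  have "t \<le> part_at lam i \<longleftrightarrow> i \<in> ?A"
    using assms unfolding part_at_def by auto
  also have "\<dots> \<longleftrightarrow> i \<in> {1..card ?A}" using A by simp
  finally show ?thesis unfolding conj_part_def using assms by auto
qed

lemma skew_mem: "(x, y) \<in> skew lam mu \<longleftrightarrow> 1 \<le> x \<and> 1 \<le> y \<and> part_at mu x < y \<and> y \<le> part_at lam x"
  unfolding skew_def by auto

lemma skew_col_le:
  assumes "partition lam" "(x, y) \<in> skew lam mu"
  shows "y \<le> part_at lam 1"
proof -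
  have "1 \<le> x" "y \<le> part_at lam x" using assms(2) unfolding skew_mem by auto
  then show ?thesis using part_mono[OF assms(1), of 1 x] by linarith
qed

lemma skew_finite:
  assumes "partition lam"
  shows "finite (skew lam mu)"
proof -
  have "skew lam mu \<subseteq> {1..length lam} \<times> {1..part_at lam 1}"
  proof
    fix z assume z: "z \<in> skew lam mu"
    obtain x y where zz: "z = (x, y)" by force
    have "y \<le> part_at lam 1" using skew_col_le[OF assms] z zz by auto
    moreover have "1 \<le> x" "1 \<le> y" "y \<le> part_at lam x" using z zz skew_mem by auto
    moreover have "x \<le> length lam"
      using \<open>1 \<le> y\<close> \<open>y \<le> part_at lam x\<close> unfolding part_at_def by (auto split: if_splits)
    ultimately show "z \<in> {1..length lam} \<times> {1..part_at lam 1}" using zz by auto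
  qed
  then show ?thesis by (rule finite_subset) auto
qed

lemma content_eq: "content lam r (x, y) = int y - int x + r - 1 + int (conj_part lam 1)"
  unfolding content_def by simp

lemma leftmost_props:
  assumes "partition lam" "z \<in> skew lam mu" "content lam r z = c"
  shows "leftmost_of lam mu r c \<in> skew lam mu \<and> content lam r (leftmost_of lam mu r c) = c \<and>
     (\<forall>y\<in>skew lam mu. content lam r y = c \<longrightarrow> snd (leftmost_of lam mu r c) \<le> snd y)"
proof -
  let ?C = "{x\<in>skew lam mu. content lam r x = c}"
  have fin: "finite ?C" using skew_finite[OF assms(1)] by auto
  have ne: "?C \<noteq> {}" using assms(2,3) by blast
  have "Min (snd ` ?C) \<in> snd ` ?C" using Min_in fin ne by blast
  then obtain x where x: "x \<in> ?C" "snd x = Min (snd ` ?C)" by auto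
  have P: "x \<in> skew lam mu \<and> content lam r x = c \<and> (\<forall>y\<in>skew lam mu. content lam r y = c \<longrightarrow> snd x \<le> snd y)"
    using x fin by auto
  have U: "y = x" if y: "y \<in> skew lam mu \<and> content lam r y = c \<and> (\<forall>y'\<in>skew lam mu. content lam r y' = c \<longrightarrow> snd y \<le> snd y')" for y
  proof -
    have s: "snd y = snd x" using y P by force
    then have "fst y = fst x" using y P unfolding content_def by simp
    then show "y = x" using s by (simp add: prod_eq_iff)
  qed
  have "leftmost_of lam mu r c = x" unfolding leftmost_of_def
    by (rule the_equality) (use P U in blast)+
  then show ?thesis using P by simp
qed

lemma rightmost_props:
  assumes "partition lam" "z \<in> skew lam mu" "content lam r z = c"
  shows "rightmost_of lam mu r c \<in> skew lam mu \<and> content lam r (rightmost_of lam mu r c) = c \<and>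
     (\<forall>y\<in>skew lam mu. content lam r y = c \<longrightarrow> snd y \<le> snd (rightmost_of lam mu r c))"
proof -
  let ?C = "{x\<in>skew lam mu. content lam r x = c}"
  have fin: "finite ?C" using skew_finite[OF assms(1)] by auto
  have ne: "?C \<noteq> {}" using assms(2,3) by blast
  have "Max (snd ` ?C) \<in> snd ` ?C" using Max_in fin ne by blast
  then obtain x where x: "x \<in> ?C" "snd x = Max (snd ` ?C)" by auto
  have P: "x \<in> skew lam mu \<and> content lam r x = c \<and> (\<forall>y\<in>skew lam mu. content lam r y = c \<longrightarrow> snd y \<le> snd x)"
    using x fin by auto
  have U: "y = x" if y: "y \<in> skew lam mu \<and> content lam r y = c \<and> (\<forall>y'\<in>skew lam mu. content lam r y' = c \<longrightarrow> snd y' \<le> snd y)" for y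
  proof -
    have s: "snd y = snd x" using y P by force
    then have "fst y = fst x" using y P unfolding content_def by simp
    then show "y = x" using s by (simp add: prod_eq_iff)
  qed
  have "rightmost_of lam mu r c = x" unfolding rightmost_of_def
    by (rule the_equality) (use P U in blast)+
  then show ?thesis using P by simp
qed

lemma leftmost_mono:
  assumes pl: "partition lam" and pm: "partition mu"
    and m: "m \<in> skew lam mu" "content lam r m = c" "\<forall>y\<in>skew lam mu. content lam r y = c \<longrightarrow> snd m \<le> snd y"
    and m': "m' \<in> skew lam mu" "content lam r m' = c'"
    and cc: "c \<le> c'"
  shows "snd m \<le> snd m'"
proof (rule ccontr)
  assume H: "\<not> snd m \<le> snd m'"
  obtain i j where mm: "m = (i,j)" by force
  obtain i' j' where mm': "m' = (i',j')" by force
  have lt: "j' < j" using H mm mm' by simp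
  have c2: "int j - int i \<le> int j' - int i'" using cc m(2) m'(2) mm mm' content_eq by force
  define i'' where "i'' = i + j' - j"
  have ii: "i' \<le> i''" "i'' \<le> i" using lt c2 unfolding i''_def by linarith+
  have s1: "1 \<le> i'" "1 \<le> j'" "part_at mu i' < j'" "j \<le> part_at lam i"
    using m(1) m'(1) mm mm' skew_mem by auto
  have "part_at mu i'' \<le> part_at mu i'" using part_mono[OF pm s1(1) ii(1)] .
  moreover have "part_at lam i \<le> part_at lam i''" using part_mono[OF pl _ ii(2)] s1 ii by linarith
  ultimately have sk: "(i'', j') \<in> skew lam mu" using s1 ii lt skew_mem by force
  have jle: "j \<le> i + j'"
  proof (rule ccontr)
    assume "\<not> j \<le> i + j'"
    then have "i'' = 0" unfolding i''_def by simp
    then show False using ii(1) s1(1) by simp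
  qed
  have ei: "int i'' = int i + int j' - int j" unfolding i''_def using jle
    by (simp add: of_nat_diff)
  have "content lam r (i'', j') = c" using m(2) mm ei by (simp add: content_eq)
  then have "j \<le> j'" using m(3) sk mm by force
  then show False using lt by simp
qed

lemma rightmost_mono:
  assumes pl: "partition lam" and pm: "partition mu"
    and m: "m \<in> skew lam mu" "content lam r m = c"
    and m': "m' \<in> skew lam mu" "content lam r m' = c'" "\<forall>y\<in>skew lam mu. content lam r y = c' \<longrightarrow> snd y \<le> snd m'"
    and cc: "c \<le> c'"
  shows "snd m \<le> snd m'"
proof (rule ccontr)
  assume H: "\<not> snd m \<le> snd m'"
  obtain i j where mm: "m = (i,j)" by force
  obtain i' j' where mm': "m' = (i',j')" by force
  have lt: "j' < j" using H mm mm' by simp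
  have c2: "int j - int i \<le> int j' - int i'" using cc m(2) m'(2) mm mm' content_eq by force
  define i'' where "i'' = i' + j - j'"
  have ii: "i' \<le> i''" "i'' \<le> i" using lt c2 unfolding i''_def by linarith+
  have s1: "1 \<le> i'" "1 \<le> j'" "part_at mu i' < j'" "j \<le> part_at lam i"
    using m(1) m'(1) mm mm' skew_mem by auto
  have "part_at mu i'' \<le> part_at mu i'" using part_mono[OF pm s1(1) ii(1)] .
  moreover have "part_at lam i \<le> part_at lam i''" using part_mono[OF pl _ ii(2)] s1 ii by linarith
  ultimately have sk: "(i'', j) \<in> skew lam mu" using s1 ii lt skew_mem by force
  have "content lam r (i'', j) = c'" using m'(2) mm' content_eq ii lt unfolding i''_def by force
  then have "j \<le> j'" using m'(3) sk mm' by force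
  then show False using lt by simp
qed

lemma chain_mono:
  fixes A :: "nat \<Rightarrow> int"
  assumes "j \<le> j'" "\<And>t. j \<le> t \<Longrightarrow> t < j' \<Longrightarrow> A t \<le> A (Suc t)"
  shows "A j \<le> A j'"
  using assms(1)
proof (induction rule: dec_induct)
  case base show ?case by simp
next
  case (step n) then show ?case using assms(2)[of n] by linarith
qed

lemma conn_cross:
  assumes cr: "connected_rshape lam mu" and u: "u \<in> skew lam mu" and v: "v \<in> skew lam mu"
    and ut: "snd u \<le> t" and tv: "t < snd v"
  shows "conj_part mu t < conj_part lam (t+1)"
proof (rule ccontr)
  assume H: "\<not> ?thesis"
  let ?E = "{(u, v). u \<in> skew lam mu \<and> v \<in> skew lam mu \<and> adjacent u v}"
  have pl: "partition lam" "partition mu" using cr connected_rshape_def by auto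
  have t1: "1 \<le> t" using u ut skew_mem by (cases u) force
  have path: "(u, v) \<in> ?E\<^sup>*" using cr u v unfolding edge_connected_def connected_rshape_def by blast
  have "snd w \<le> t" if "(u, w) \<in> ?E\<^sup>*" for w
    using that
  proof (induction rule: rtrancl_induct)
    case base show ?case using ut .
  next
    case (step y z)
    obtain y1 y2 where yy: "y = (y1,y2)" by force
    obtain z1 z2 where zz: "z = (z1,z2)" by force
    from step have adj: "adjacent y z" "y \<in> skew lam mu" "z \<in> skew lam mu" by auto
    show ?case
    proof (rule ccontr)
      assume "\<not> snd z \<le> t"
      then have e: "z2 = t + 1" "y2 = t" "z1 = y1" using adj(1) step.IH yy zz unfolding adjacent_def by auto
      have y1: "1 \<le> y1" "part_at mu y1 < t" using adj(2) yy e skew_mem by auto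
      have "t + 1 \<le> part_at lam y1" using adj(3) zz e skew_mem by auto
      then have "y1 \<le> conj_part lam (t+1)" using conj_iff[OF pl(1), of "t+1" y1] y1 by simp
      moreover have "\<not> y1 \<le> conj_part mu t" using conj_iff[OF pl(2) t1 y1(1)] y1 by simp
      ultimately show False using H by simp
    qed
  qed
  then show False using path tv by fastforce
qed

lemma lam_side_a:
  assumes cr: "connected_rshape lam mu" and cf: "column_flags lam mu N a b"
    and z: "z \<in> skew lam mu" "content lam r z = c"
    and z': "z' \<in> skew lam mu" "content lam r z' = c'"
    and cc: "c \<le> c'"
  shows "a (snd (leftmost_of lam mu r c)) - (int (conj_part mu (snd (leftmost_of lam mu r c))) + 1) + int (fst (leftmost_of lam mu r c))
       - (a (snd (leftmost_of lam mu r c')) - (int (conj_part mu (snd (leftmost_of lam mu r c'))) + 1) + int (fst (leftmost_of lam mu r c'))) \<le> c' - c"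
proof -
  have pl: "partition lam" "partition mu" using cr connected_rshape_def by auto
  define m where "m = leftmost_of lam mu r c"
  define m' where "m' = leftmost_of lam mu r c'"
  have P: "m \<in> skew lam mu" "content lam r m = c" "\<forall>y\<in>skew lam mu. content lam r y = c \<longrightarrow> snd m \<le> snd y"
    using leftmost_props[OF pl(1) z] unfolding m_def by auto
  have P': "m' \<in> skew lam mu" "content lam r m' = c'"
    using leftmost_props[OF pl(1) z'] unfolding m'_def by auto
  have jj: "snd m \<le> snd m'" by (rule leftmost_mono[OF pl P P' cc])
  define A where "A t = a t - int (conj_part mu t) + int t" for t
  have "A (snd m) \<le> A (snd m')"
  proof (rule chain_mono[OF jj])
    fix t assume t: "snd m \<le> t" "t < snd m'"
    have t1: "1 \<le> t" using t P(1) skew_mem by (cases m) auto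
    have "snd m' \<le> part_at lam 1" using skew_col_le[OF pl(1)] P'(1) by (cases m') auto
    then have tN: "t < N" using cf t unfolding column_flags_def by linarith
    have "conj_part mu t < conj_part lam (t+1)" by (rule conn_cross[OF cr P(1) P'(1) t])
    then have "a t - a (t + 1) \<le> int (conj_part mu t) - int (conj_part mu (t + 1)) + 1"
      using cf t1 tN unfolding column_flags_def by blast
    then show "A t \<le> A (Suc t)" unfolding A_def by simp
  qed
  moreover have "c = int (snd m) - int (fst m) + r - 1 + int (conj_part lam 1)" using P(2) unfolding content_def by linarith
  moreover have "c' = int (snd m') - int (fst m') + r - 1 + int (conj_part lam 1)" using P'(2) unfolding content_def by linarith
  ultimately show ?thesis unfolding A_def m_def[symmetric] m'_def[symmetric] by linarith
qed

lemma lam_side_b: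
  assumes cr: "connected_rshape lam mu" and cf: "column_flags lam mu N a b"
    and z: "z \<in> skew lam mu" "content lam r z = c"
    and z': "z' \<in> skew lam mu" "content lam r z' = c'"
    and cc: "c \<le> c'"
  shows "b (snd (rightmost_of lam mu r c)) - int (conj_part lam (snd (rightmost_of lam mu r c))) + int (fst (rightmost_of lam mu r c))
       - (b (snd (rightmost_of lam mu r c')) - int (conj_part lam (snd (rightmost_of lam mu r c'))) + int (fst (rightmost_of lam mu r c'))) \<le> c' - c"
proof -
  have pl: "partition lam" "partition mu" using cr connected_rshape_def by auto
  define m where "m = rightmost_of lam mu r c"
  define m' where "m' = rightmost_of lam mu r c'"
  have P: "m \<in> skew lam mu" "content lam r m = c"
    using rightmost_props[OF pl(1) z] unfolding m_def by auto
  have P': "m' \<in> skew lam mu" "content lam r m' = c'" "\<forall>y\<in>skew lam mu. content lam r y = c' \<longrightarrow> snd y \<le> snd m'"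
    using rightmost_props[OF pl(1) z'] unfolding m'_def by auto
  have jj: "snd m \<le> snd m'" by (rule rightmost_mono[OF pl P P' cc])
  define B where "B t = b t - int (conj_part lam t) + int t" for t
  have "B (snd m) \<le> B (snd m')"
  proof (rule chain_mono[OF jj])
    fix t assume t: "snd m \<le> t" "t < snd m'"
    have t1: "1 \<le> t" using t P(1) skew_mem by (cases m) auto
    have "snd m' \<le> part_at lam 1" using skew_col_le[OF pl(1)] P'(1) by (cases m') auto
    then have tN: "t < N" using cf t unfolding column_flags_def by linarith
    have "conj_part mu t < conj_part lam (t+1)" by (rule conn_cross[OF cr P(1) P'(1) t])
    then have "b t - b (t + 1) \<le> int (conj_part lam t) - int (conj_part lam (t + 1)) + 1"
      using cf t1 tN unfolding column_flags_def by blast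
    then show "B t \<le> B (Suc t)" unfolding B_def by simp
  qed
  moreover have "c = int (snd m) - int (fst m) + r - 1 + int (conj_part lam 1)" using P(2) unfolding content_def by linarith
  moreover have "c' = int (snd m') - int (fst m') + r - 1 + int (conj_part lam 1)" using P'(2) unfolding content_def by linarith
  ultimately show ?thesis unfolding B_def m_def[symmetric] m'_def[symmetric] by linarith
qed



definition stripish :: "(nat \<times> nat) set \<Rightarrow> bool" where
  "stripish S \<longleftrightarrow> finite S \<and> (\<forall>z\<in>S. 1 \<le> fst z \<and> 1 \<le> snd z) \<and>
     (\<forall>i. 1 \<le> i \<and> i \<le> shape_rows S \<longrightarrow> (\<exists>j. (i, j) \<in> S)) \<and>
     (\<forall>t. 1 \<le> t \<and> t \<le> shape_cols S \<longrightarrow> (\<exists>x. (x, t) \<in> S)) \<and>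
     (\<forall>x y x' y'. (x, y) \<in> S \<longrightarrow> (x', y') \<in> S \<longrightarrow> (x \<le> x' \<and> y' \<le> y) \<or> (x' \<le> x \<and> y \<le> y'))"

lemma stripish_fin: "stripish S \<Longrightarrow> finite S"
  unfolding stripish_def by simp

lemma stripish_pos: "stripish S \<Longrightarrow> (x, y) \<in> S \<Longrightarrow> 1 \<le> x \<and> 1 \<le> y"
  unfolding stripish_def by fastforce

lemma stripish_row: "stripish S \<Longrightarrow> 1 \<le> i \<Longrightarrow> i \<le> shape_rows S \<Longrightarrow> \<exists>j. (i, j) \<in> S"
  unfolding stripish_def by simp

lemma stripish_col: "stripish S \<Longrightarrow> 1 \<le> t \<Longrightarrow> t \<le> shape_cols S \<Longrightarrow> \<exists>x. (x, t) \<in> S"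
  unfolding stripish_def by simp

lemma stripish_comp: "stripish S \<Longrightarrow> (x, y) \<in> S \<Longrightarrow> (x', y') \<in> S \<Longrightarrow> (x \<le> x' \<and> y' \<le> y) \<or> (x' \<le> x \<and> y \<le> y')"
  unfolding stripish_def by simp

lemma fin_col: "finite S \<Longrightarrow> finite {x. (x, t) \<in> S}"
  by (rule finite_subset[of _ "fst ` S"]) force+

lemma fin_row: "finite S \<Longrightarrow> finite {j. (i, j) \<in> S}"
  by (rule finite_subset[of _ "snd ` S"]) force+

lemma col_min:
  assumes "finite S" "(x, t) \<in> S"
  shows "(Min {x. (x, t) \<in> S}, t) \<in> S" "\<And>x'. (x', t) \<in> S \<Longrightarrow> Min {x. (x, t) \<in> S} \<le> x'"
proof -
  have ne: "{x. (x, t) \<in> S} \<noteq> {}" using assms(2) by blast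
  show "(Min {x. (x, t) \<in> S}, t) \<in> S" using Min_in[OF fin_col[OF assms(1)] ne] by simp
  fix x' assume "(x', t) \<in> S" then show "Min {x. (x, t) \<in> S} \<le> x'" using Min_le[OF fin_col[OF assms(1)]] by simp
qed

lemma col_max:
  assumes "finite S" "(x, t) \<in> S"
  shows "(Max {x. (x, t) \<in> S}, t) \<in> S" "\<And>x'. (x', t) \<in> S \<Longrightarrow> x' \<le> Max {x. (x, t) \<in> S}"
proof -
  have ne: "{x. (x, t) \<in> S} \<noteq> {}" using assms(2) by blast
  show "(Max {x. (x, t) \<in> S}, t) \<in> S" using Max_in[OF fin_col[OF assms(1)] ne] by simp
  fix x' assume "(x', t) \<in> S" then show "x' \<le> Max {x. (x, t) \<in> S}" using Max_ge[OF fin_col[OF assms(1)]] by simp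
qed

lemma row_min:
  assumes "finite S" "(i, y) \<in> S"
  shows "(i, Min {j. (i, j) \<in> S}) \<in> S" "\<And>y'. (i, y') \<in> S \<Longrightarrow> Min {j. (i, j) \<in> S} \<le> y'"
proof -
  have ne: "{j. (i, j) \<in> S} \<noteq> {}" using assms(2) by blast
  show "(i, Min {j. (i, j) \<in> S}) \<in> S" using Min_in[OF fin_row[OF assms(1)] ne] by simp
  fix y' assume "(i, y') \<in> S" then show "Min {j. (i, j) \<in> S} \<le> y'" using Min_le[OF fin_row[OF assms(1)]] by simp
qed

lemma row_max:
  assumes "finite S" "(i, y) \<in> S"
  shows "(i, Max {j. (i, j) \<in> S}) \<in> S" "\<And>y'. (i, y') \<in> S \<Longrightarrow> y' \<le> Max {j. (i, j) \<in> S}"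
proof -
  have ne: "{j. (i, j) \<in> S} \<noteq> {}" using assms(2) by blast
  show "(i, Max {j. (i, j) \<in> S}) \<in> S" using Max_in[OF fin_row[OF assms(1)] ne] by simp
  fix y' assume "(i, y') \<in> S" then show "y' \<le> Max {j. (i, j) \<in> S}" using Max_ge[OF fin_row[OF assms(1)]] by simp
qed

lemma S_bounds:
  assumes "finite S" "(x, y) \<in> S"
  shows "x \<le> shape_rows S" "y \<le> shape_cols S"
  using assms unfolding shape_rows_def shape_cols_def by (force intro: Max_ge)+

lemma kappa_len: "length (shape_kappa S) = shape_rows S"
  unfolding shape_kappa_def by simp

lemma kappa_at: "1 \<le> i \<Longrightarrow> i \<le> shape_rows S \<Longrightarrow> part_at (shape_kappa S) i = Max {j. (i, j) \<in> S}"
proof -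
  assume i: "1 \<le> i" "i \<le> shape_rows S"
  have e: "[1..<shape_rows S + 1] ! (i - 1) = i" using i by (subst nth_upt) auto
  show ?thesis unfolding part_at_def shape_kappa_def using i e by (simp del: upt_Suc)
qed

lemma nu_len: "length (shape_nu S) = shape_rows S"
  unfolding shape_nu_def by simp

lemma nu_at: "1 \<le> i \<Longrightarrow> i \<le> shape_rows S \<Longrightarrow> part_at (shape_nu S) i = Min {j. (i, j) \<in> S} - 1"
proof -
  assume i: "1 \<le> i" "i \<le> shape_rows S"
  have e: "[1..<shape_rows S + 1] ! (i - 1) = i" using i by (subst nth_upt) auto
  show ?thesis unfolding part_at_def shape_nu_def using i e by (simp del: upt_Suc)
qed



lemma conj_nu:
  assumes st: "stripish S" and t: "1 \<le> t" "t \<le> shape_cols S"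
  shows "conj_part (shape_nu S) t = Min {x. (x, t) \<in> S} - 1"
proof -
  have fin: "finite S" using stripish_fin[OF st] .
  obtain x0 where x0: "(x0, t) \<in> S" using stripish_col[OF st] t by blast
  let ?g = "Min {x. (x, t) \<in> S}"
  have g: "(?g, t) \<in> S" "\<And>x'. (x', t) \<in> S \<Longrightarrow> ?g \<le> x'" using col_min[OF fin x0] by auto
  have gR: "?g \<le> shape_rows S" using S_bounds[OF fin g(1)] by simp
  have comp: "\<And>x y x' y'. (x, y) \<in> S \<Longrightarrow> (x', y') \<in> S \<Longrightarrow> (x \<le> x' \<and> y' \<le> y) \<or> (x' \<le> x \<and> y \<le> y')"
    using stripish_comp[OF st] by blast
  have key: "t \<le> Min {j. (i, j) \<in> S} - 1 \<longleftrightarrow> i < ?g" if i: "1 \<le> i" "i \<le> shape_rows S" for i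
  proof -
    obtain y0 where y0: "(i, y0) \<in> S" using stripish_row[OF st] i by blast
    let ?h = "Min {j. (i, j) \<in> S}"
    have h: "(i, ?h) \<in> S" "\<And>y'. (i, y') \<in> S \<Longrightarrow> ?h \<le> y'" using row_min[OF fin y0] by auto
    show ?thesis
    proof
      assume a: "t \<le> ?h - 1"
      show "i < ?g"
      proof (rule ccontr)
        assume "\<not> i < ?g"
        then have "?g \<le> i" by simp
        show False
        proof (cases "?g = i")
          case True
          then have "?h \<le> t" using h(2) g(1) by simp
          then show False using a t(1) by arith
        next
          case False
          then have "?g < i" using \<open>?g \<le> i\<close> by simp
          then have "?h \<le> t" using comp[OF h(1) g(1)] by simp
          then show False using a t(1) by arith
        qed
      qed
    next
      assume a: "i < ?g"
      show "t \<le> ?h - 1"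
      proof (rule ccontr)
        assume "\<not> t \<le> ?h - 1"
        then have "?h \<le> t" by simp
        then have "t \<le> ?h" using comp[OF h(1) g(1)] a by auto
        then have "(i, t) \<in> S" using h(1) \<open>?h \<le> t\<close> by simp
        then show False using g(2) a by fastforce
      qed
    qed
  qed
  have "{i. 1 \<le> i \<and> i \<le> length (shape_nu S) \<and> t \<le> part_at (shape_nu S) i} = {1..?g - 1}"
  proof -
    have "{i. 1 \<le> i \<and> i \<le> length (shape_nu S) \<and> t \<le> part_at (shape_nu S) i}
        = {i. 1 \<le> i \<and> i \<le> shape_rows S \<and> i < ?g}"
    proof (rule Collect_cong)
      fix i
      show "(1 \<le> i \<and> i \<le> length (shape_nu S) \<and> t \<le> part_at (shape_nu S) i) =
            (1 \<le> i \<and> i \<le> shape_rows S \<and> i < ?g)"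
      proof (cases "1 \<le> i \<and> i \<le> shape_rows S")
        case True then show ?thesis using key[of i] nu_at[of i S] nu_len[of S] by simp
      next
        case False then show ?thesis using nu_len[of S] by auto
      qed
    qed
    also have "\<dots> = {1..?g - 1}"
    proof (rule set_eqI)
      fix i show "i \<in> {i. 1 \<le> i \<and> i \<le> shape_rows S \<and> i < ?g} \<longleftrightarrow> i \<in> {1..?g - 1}"
        using gR by simp linarith
    qed
    finally show ?thesis .
  qed
  then show ?thesis unfolding conj_part_def by simp
qed



lemma conj_kappa:
  assumes st: "stripish S" and t: "1 \<le> t" "t \<le> shape_cols S"
  shows "conj_part (shape_kappa S) t = Max {x. (x, t) \<in> S}"
proof -
  have fin: "finite S" using stripish_fin[OF st] .
  obtain x0 where x0: "(x0, t) \<in> S" using stripish_col[OF st] t by blast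
  let ?d = "Max {x. (x, t) \<in> S}"
  have d: "(?d, t) \<in> S" "\<And>x'. (x', t) \<in> S \<Longrightarrow> x' \<le> ?d" using col_max[OF fin x0] by auto
  have dR: "?d \<le> shape_rows S" using S_bounds[OF fin d(1)] by simp
  have comp: "\<And>x y x' y'. (x, y) \<in> S \<Longrightarrow> (x', y') \<in> S \<Longrightarrow> (x \<le> x' \<and> y' \<le> y) \<or> (x' \<le> x \<and> y \<le> y')"
    using stripish_comp[OF st] by blast
  have key: "t \<le> Max {j. (i, j) \<in> S} \<longleftrightarrow> i \<le> ?d" if i: "1 \<le> i" "i \<le> shape_rows S" for i
  proof -
    obtain y0 where y0: "(i, y0) \<in> S" using stripish_row[OF st] i by blast
    let ?e = "Max {j. (i, j) \<in> S}"
    have e: "(i, ?e) \<in> S" "\<And>y'. (i, y') \<in> S \<Longrightarrow> y' \<le> ?e" using row_max[OF fin y0] by auto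
    show ?thesis
    proof
      assume a: "t \<le> ?e"
      show "i \<le> ?d"
      proof (rule ccontr)
        assume b: "\<not> i \<le> ?d"
        then have "?e \<le> t" using comp[OF e(1) d(1)] by auto
        then have "(i, t) \<in> S" using e(1) a by simp
        then show False using d(2) b by fastforce
      qed
    next
      assume a: "i \<le> ?d"
      show "t \<le> ?e"
      proof (rule ccontr)
        assume b: "\<not> t \<le> ?e"
        then have "?d \<le> i" using comp[OF e(1) d(1)] by auto
        then have "i = ?d" using a by simp
        then show False using e(2) d(1) b by fastforce
      qed
    qed
  qed
  have "{i. 1 \<le> i \<and> i \<le> length (shape_kappa S) \<and> t \<le> part_at (shape_kappa S) i} = {1..?d}"
  proof -
    have "{i. 1 \<le> i \<and> i \<le> length (shape_kappa S) \<and> t \<le> part_at (shape_kappa S) i}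
        = {i. 1 \<le> i \<and> i \<le> shape_rows S \<and> i \<le> ?d}"
      using key kappa_at kappa_len by auto
    also have "\<dots> = {1..?d}" using dR by auto
    finally show ?thesis .
  qed
  then show ?thesis unfolding conj_part_def by simp
qed

lemma conj_kappa1:
  assumes st: "stripish S"
  shows "conj_part (shape_kappa S) 1 = shape_rows S"
proof -
  have fin: "finite S" using stripish_fin[OF st] .
  have "{i. 1 \<le> i \<and> i \<le> length (shape_kappa S) \<and> 1 \<le> part_at (shape_kappa S) i} = {1..shape_rows S}"
  proof -
    have "1 \<le> part_at (shape_kappa S) i" if i: "1 \<le> i" "i \<le> shape_rows S" for i
    proof -
      obtain y0 where y0: "(i, y0) \<in> S" using stripish_row[OF st] i by blast
      have "(i, Max {j. (i, j) \<in> S}) \<in> S" using row_max[OF fin y0] by auto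
      then have "1 \<le> Max {j. (i, j) \<in> S}" using stripish_pos[OF st] by fastforce
      then show ?thesis using kappa_at i by simp
    qed
    then show ?thesis using kappa_len by auto
  qed
  then show ?thesis unfolding conj_part_def by simp
qed

lemma kappa1_le:
  assumes st: "stripish S"
  shows "part_at (shape_kappa S) 1 \<le> shape_cols S"
proof (cases "1 \<le> shape_rows S")
  case True
  have fin: "finite S" using stripish_fin[OF st] .
  obtain y0 where y0: "(1, y0) \<in> S" using stripish_row[OF st] True by blast
  have "(1, Max {j. (1, j) \<in> S}) \<in> S" using row_max[OF fin y0] by auto
  then have "Max {j. (1, j) \<in> S} \<le> shape_cols S" using S_bounds[OF fin] by blast
  then show ?thesis using kappa_at[of 1 S] True by simp
next
  case False
  then show ?thesis unfolding part_at_def by (simp add: kappa_len)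
qed

lemma col_min_mono:
  assumes st: "stripish S" and t: "1 \<le> t" "t + 1 \<le> shape_cols S"
  shows "Min {x. (x, t + 1) \<in> S} \<le> Min {x. (x, t) \<in> S}" "Max {x. (x, t + 1) \<in> S} \<le> Max {x. (x, t) \<in> S}"
proof -
  have fin: "finite S" using stripish_fin[OF st] .
  obtain x0 where x0: "(x0, t) \<in> S" using stripish_col[OF st, of t] t by auto
  obtain x1 where x1: "(x1, t + 1) \<in> S" using stripish_col[OF st, of "t+1"] t by auto
  have comp: "\<And>x y x' y'. (x, y) \<in> S \<Longrightarrow> (x', y') \<in> S \<Longrightarrow> (x \<le> x' \<and> y' \<le> y) \<or> (x' \<le> x \<and> y \<le> y')"
    using stripish_comp[OF st] by blast
  show "Min {x. (x, t + 1) \<in> S} \<le> Min {x. (x, t) \<in> S}"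
    using comp[OF col_min(1)[OF fin x0] col_min(1)[OF fin x1]] by auto
  show "Max {x. (x, t + 1) \<in> S} \<le> Max {x. (x, t) \<in> S}"
    using comp[OF col_max(1)[OF fin x0] col_max(1)[OF fin x1]] by auto
qed



lemma sp_diff: "snd (strip_pos up c0 n) - fst (strip_pos up c0 n) = int n"
  by (induction n) auto

lemma sp_step:
  "(fst (strip_pos up c0 (Suc n)) = fst (strip_pos up c0 n) - 1 \<and> snd (strip_pos up c0 (Suc n)) = snd (strip_pos up c0 n))
   \<or> (fst (strip_pos up c0 (Suc n)) = fst (strip_pos up c0 n) \<and> snd (strip_pos up c0 (Suc n)) = snd (strip_pos up c0 n) + 1)"
  by auto

lemma sp_mono:
  assumes "n \<le> n'"
  shows "fst (strip_pos up c0 n') \<le> fst (strip_pos up c0 n) \<and> snd (strip_pos up c0 n) \<le> snd (strip_pos up c0 n')"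
  using assms
proof (induction rule: dec_induct)
  case base then show ?case by simp
next
  case (step k) then show ?case using sp_step[of up c0 k] by auto
qed

lemma ivt_nat:
  fixes f :: "nat \<Rightarrow> int"
  assumes st: "\<And>n. f (Suc n) = f n \<or> f (Suc n) = f n + 1" and ab: "a \<le> b"
    and v: "f a \<le> v" "v \<le> f b"
  shows "\<exists>n. a \<le> n \<and> n \<le> b \<and> f n = v"
  using ab v(2)
proof (induction rule: dec_induct)
  case base then show ?case using v(1) by (intro exI[of _ a]) auto
next
  case (step k)
  show ?case
  proof (cases "v \<le> f k")
    case True then show ?thesis using step by force
  next
    case False
    then have "v = f (Suc k)" using st[of k] step.prems by auto
    then show ?thesis using step by (intro exI[of _ "Suc k"]) auto
  qed
qed

lemma norm_strip:
  assumes n01: "n0 \<le> n1"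
    and S: "S = normalize (strip_pos up c0 ` {n0..n1})"
  shows "stripish S"
    and "\<forall>z\<in>S. \<exists>n. n0 \<le> n \<and> n \<le> n1 \<and> int (snd z) - int (fst z) + int (shape_rows S) - 1 = int n - int n0"
proof -
  define P where "P = strip_pos up c0"
  define T where "T = P ` {n0..n1}"
  have finT: "finite T" unfolding T_def by simp
  have mono: "\<And>n n'. n \<le> n' \<Longrightarrow> fst (P n') \<le> fst (P n) \<and> snd (P n) \<le> snd (P n')"
    unfolding P_def by (rule sp_mono)
  have xm: "Min (fst ` T) = fst (P n1)"
    by (rule Min_eqI) (use finT n01 mono in \<open>auto simp: T_def\<close>)
  have ym: "Min (snd ` T) = snd (P n0)"
    by (rule Min_eqI) (use finT n01 mono in \<open>auto simp: T_def\<close>)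
  define X where "X n = nat (fst (P n) - fst (P n1) + 1)" for n
  define Y where "Y n = nat (snd (P n) - snd (P n0) + 1)" for n
  have SX: "S = (\<lambda>n. (X n, Y n)) ` {n0..n1}"
    unfolding S normalize_def P_def[symmetric] T_def[symmetric] xm ym
    unfolding T_def image_image X_def Y_def by (simp add: case_prod_beta)
  have Xi: "int (X n) = fst (P n) - fst (P n1) + 1" if "n \<le> n1" for n
    using mono[OF that] unfolding X_def by simp
  have Yi: "int (Y n) = snd (P n) - snd (P n0) + 1" if "n0 \<le> n" for n
    using mono[OF that] unfolding Y_def by simp
  have finS: "finite S" unfolding SX by simp
  have rows: "shape_rows S = X n0"
    unfolding shape_rows_def SX image_image
  proof (rule Max_eqI)
    fix y assume "y \<in> (\<lambda>x. fst (X x, Y x)) ` {n0..n1}"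
    then obtain n where n: "n0 \<le> n" "n \<le> n1" "y = X n" by auto
    then show "y \<le> X n0" using Xi[of n] Xi[of n0] mono[of n0 n] n01 by simp
  qed (use n01 in auto)
  have cols: "shape_cols S = Y n1"
    unfolding shape_cols_def SX image_image
  proof (rule Max_eqI)
    fix y assume "y \<in> (\<lambda>x. snd (X x, Y x)) ` {n0..n1}"
    then obtain n where n: "n0 \<le> n" "n \<le> n1" "y = Y n" by auto
    then show "y \<le> Y n1" using Yi[of n] Yi[of n1] mono[of n n1] n01 by simp
  qed (use n01 in auto)
  have memS: "(X n, Y n) \<in> S" if "n0 \<le> n" "n \<le> n1" for n using that SX by auto
  show "stripish S"
    unfolding stripish_def
  proof (intro conjI allI impI ballI)
    show "finite S" by (rule finS)
  next
    fix z assume "z \<in> S"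
    then obtain n where n: "n0 \<le> n" "n \<le> n1" "z = (X n, Y n)" using SX by auto
    show "1 \<le> fst z" using Xi[OF n(2)] mono[OF n(2)] n(3) by simp
    show "1 \<le> snd z" using Yi[OF n(1)] mono[OF n(1)] n(3) by simp
  next
    fix i assume i: "1 \<le> i \<and> i \<le> shape_rows S"
    have "\<exists>n. n0 \<le> n \<and> n \<le> n1 \<and> - fst (P n) = - (fst (P n1) + int i - 1)"
    proof (rule ivt_nat[OF _ n01])
      fix n show "- fst (P (Suc n)) = - fst (P n) \<or> - fst (P (Suc n)) = - fst (P n) + 1"
        using sp_step[of up c0 n] unfolding P_def by auto
    next
      show "- fst (P n0) \<le> - (fst (P n1) + int i - 1)" using i rows Xi[of n0] n01 by simp
    next
      show "- (fst (P n1) + int i - 1) \<le> - fst (P n1)" using i by simp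
    qed
    then obtain n where n: "n0 \<le> n" "n \<le> n1" "fst (P n) = fst (P n1) + int i - 1" by auto
    then have "X n = i" unfolding X_def by simp
    then show "\<exists>j. (i, j) \<in> S" using memS[OF n(1,2)] by auto
  next
    fix t assume t: "1 \<le> t \<and> t \<le> shape_cols S"
    have "\<exists>n. n0 \<le> n \<and> n \<le> n1 \<and> snd (P n) = snd (P n0) + int t - 1"
    proof (rule ivt_nat[OF _ n01])
      fix n show "snd (P (Suc n)) = snd (P n) \<or> snd (P (Suc n)) = snd (P n) + 1"
        using sp_step[of up c0 n] unfolding P_def by auto
    next
      show "snd (P n0) \<le> snd (P n0) + int t - 1" using t by simp
    next
      show "snd (P n0) + int t - 1 \<le> snd (P n1)" using t cols Yi[of n1] n01 by simp
    qed
    then obtain n where n: "n0 \<le> n" "n \<le> n1" "snd (P n) = snd (P n0) + int t - 1" by auto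
    then have "Y n = t" unfolding Y_def by simp
    then show "\<exists>x. (x, t) \<in> S" using memS[OF n(1,2)] by auto
  next
    fix x y x' y' assume a: "(x, y) \<in> S" "(x', y') \<in> S"
    then obtain n where n: "n0 \<le> n" "n \<le> n1" "x = X n" "y = Y n" using SX by auto
    obtain n' where n': "n0 \<le> n'" "n' \<le> n1" "x' = X n'" "y' = Y n'" using SX a by auto
    show "x \<le> x' \<and> y' \<le> y \<or> x' \<le> x \<and> y \<le> y'"
    proof (cases "n \<le> n'")
      case True
      have "int (X n') \<le> int (X n)" "int (Y n) \<le> int (Y n')"
        using mono[OF True] Xi[OF n(2)] Xi[OF n'(2)] Yi[OF n(1)] Yi[OF n'(1)] by linarith+
      then have "x' \<le> x \<and> y \<le> y'" using n n' by simp
      then show ?thesis by simp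
    next
      case False
      then have le: "n' \<le> n" by simp
      have "int (X n) \<le> int (X n')" "int (Y n') \<le> int (Y n)"
        using mono[OF le] Xi[OF n(2)] Xi[OF n'(2)] Yi[OF n(1)] Yi[OF n'(1)] by linarith+
      then have "x \<le> x' \<and> y' \<le> y" using n n' by simp
      then show ?thesis by simp
    qed
  qed
  show "\<forall>z\<in>S. \<exists>n. n0 \<le> n \<and> n \<le> n1 \<and> int (snd z) - int (fst z) + int (shape_rows S) - 1 = int n - int n0"
  proof
    fix z assume "z \<in> S"
    then obtain n where n: "n0 \<le> n" "n \<le> n1" "z = (X n, Y n)" using SX by auto
    have "int (Y n) - int (X n) + int (X n0) - 1 = int n - int n0"
      using Xi[OF n(2)] Yi[OF n(1)] Xi[of n0] n01 sp_diff[of up c0 n] sp_diff[of up c0 n0]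
      unfolding P_def by simp
    then show "\<exists>n. n0 \<le> n \<and> n \<le> n1 \<and> int (snd z) - int (fst z) + int (shape_rows S) - 1 = int n - int n0"
      using n rows by auto
  qed
qed



lemma head_in:
  assumes "finite S" "S \<noteq> {}"
  shows "head S \<in> S"
proof -
  define r0 where "r0 = Max (fst ` S)"
  have r0: "r0 \<in> fst ` S" "\<And>y. y \<in> S \<Longrightarrow> fst y \<le> r0" using assms unfolding r0_def by auto
  define C where "C = {y\<in>S. fst y = r0}"
  have finC: "finite C" "C \<noteq> {}" using assms r0(1) unfolding C_def by auto
  have "Min (snd ` C) \<in> snd ` C" using finC by auto
  then obtain x where x: "x \<in> C" "snd x = Min (snd ` C)" by auto
  let ?P = "\<lambda>x. x \<in> S \<and> (\<forall>y\<in>S. fst y \<le> fst x) \<and> (\<forall>y\<in>S. fst y = fst x \<longrightarrow> snd x \<le> snd y)"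
  have Px: "?P x" using x r0 finC unfolding C_def by auto
  have U: "y = x" if "?P y" for y
  proof -
    have f: "fst y = fst x" using that Px by (meson antisym)
    then have "snd y = snd x" using that Px by (meson antisym)
    then show ?thesis using f by (simp add: prod_eq_iff)
  qed
  have "head S = x" unfolding head_def by (rule the_equality) (use Px U in blast)+
  then show ?thesis using Px by simp
qed

lemma tail_in:
  assumes "finite S" "S \<noteq> {}"
  shows "tail S \<in> S"
proof -
  define r0 where "r0 = Min (fst ` S)"
  have r0: "r0 \<in> fst ` S" "\<And>y. y \<in> S \<Longrightarrow> r0 \<le> fst y" using assms unfolding r0_def by auto
  define C where "C = {y\<in>S. fst y = r0}"
  have finC: "finite C" "C \<noteq> {}" using assms r0(1) unfolding C_def by auto
  have "Max (snd ` C) \<in> snd ` C" using finC by auto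
  then obtain x where x: "x \<in> C" "snd x = Max (snd ` C)" by auto
  let ?P = "\<lambda>x. x \<in> S \<and> (\<forall>y\<in>S. fst x \<le> fst y) \<and> (\<forall>y\<in>S. fst y = fst x \<longrightarrow> snd y \<le> snd x)"
  have Px: "?P x" using x r0 finC unfolding C_def by auto
  have U: "y = x" if "?P y" for y
  proof -
    have f: "fst y = fst x" using that Px by (meson antisym)
    then have "snd y = snd x" using that Px by (meson antisym)
    then show ?thesis using f by (simp add: prod_eq_iff)
  qed
  have "tail S = x" unfolding tail_def by (rule the_equality) (use Px U in blast)+
  then show ?thesis using Px by simp
qed

lemma adj_content:
  assumes "adjacent y z"
  shows "content lam r z = content lam r y + 1 \<or> content lam r z = content lam r y - 1"
  using assms unfolding adjacent_def content_def by auto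

lemma content_ivt:
  assumes ec: "edge_connected (skew lam mu)" and u: "u \<in> skew lam mu" and v: "v \<in> skew lam mu"
    and c: "content lam r u \<le> c" "c \<le> content lam r v"
  shows "\<exists>w\<in>skew lam mu. content lam r w = c"
proof -
  let ?E = "{(u, v). u \<in> skew lam mu \<and> v \<in> skew lam mu \<and> adjacent u v}"
  have path: "(u, v) \<in> ?E\<^sup>*" using ec u v unfolding edge_connected_def by blast
  have "\<forall>c. (content lam r u \<le> c \<and> c \<le> content lam r w) \<or> (content lam r w \<le> c \<and> c \<le> content lam r u)
           \<longrightarrow> (\<exists>w\<in>skew lam mu. content lam r w = c)" if "(u, w) \<in> ?E\<^sup>*" for w
    using that
  proof (induction rule: rtrancl_induct)
    case base then show ?case using u by force
  next
    case (step y z)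
    have adj: "adjacent y z" "z \<in> skew lam mu" using step by auto
    show ?case
    proof (intro allI impI)
      fix c assume h: "(content lam r u \<le> c \<and> c \<le> content lam r z) \<or> (content lam r z \<le> c \<and> c \<le> content lam r u)"
      show "\<exists>w\<in>skew lam mu. content lam r w = c"
      proof (cases "c = content lam r z")
        case True then show ?thesis using adj by blast
      next
        case False
        then have "(content lam r u \<le> c \<and> c \<le> content lam r y) \<or> (content lam r y \<le> c \<and> c \<le> content lam r u)"
          using h adj_content[OF adj(1), of lam r] by linarith
        then show ?thesis using step.IH by blast
      qed
    qed
  qed
  then show ?thesis using path c by blast
qed



theorem proposition5p5:
  fixes lam mu :: "nat list" and r :: int and N :: nat and a b :: "nat \<Rightarrow> int"
    and thetas :: "(nat \<times> nat) set list" and i j :: nat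
  assumes "connected_rshape lam mu"
    and "column_flags lam mu N a b"
    and "outer_ribbon_decomp lam mu thetas"
    and "i < length thetas" and "j < length thetas"
    and "hash_p lam r thetas i \<le> hash_q lam r thetas j"
  shows "column_flags (shape_kappa (hash_cells lam mu r thetas i j))
                      (shape_nu (hash_cells lam mu r thetas i j))
                      (shape_cols (hash_cells lam mu r thetas i j))
                      (induced_a lam mu r thetas a i j)
                      (induced_b lam mu r thetas b i j)"
proof -
  note cr = assms(1) and cf = assms(2) and od = assms(3)
  have pl: "partition lam" "partition mu" using cr connected_rshape_def by auto
  have ec: "edge_connected (skew lam mu)" using cr connected_rshape_def by auto
  have finK: "finite (skew lam mu)" by (rule skew_finite[OF pl(1)])
  define p where "p = hash_p lam r thetas i"
  define q where "q = hash_q lam r thetas j"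
  have pq: "p \<le> q" using assms(6) p_def q_def by simp
  have thi: "is_ribbon (thetas ! i)" "thetas ! i \<subseteq> skew lam mu"
    using od assms(4) unfolding outer_ribbon_decomp_def by auto
  have thj: "is_ribbon (thetas ! j)" "thetas ! j \<subseteq> skew lam mu"
    using od assms(5) unfolding outer_ribbon_decomp_def by auto
  have hu: "head (thetas ! i) \<in> skew lam mu"
  proof -
    have "thetas ! i \<noteq> {}" using thi(1) unfolding is_ribbon_def edge_connected_def by simp
    moreover have "finite (thetas ! i)" using thi(2) finK finite_subset by blast
    ultimately show ?thesis using head_in thi(2) by blast
  qed
  have tv: "tail (thetas ! j) \<in> skew lam mu"
  proof -
    have "thetas ! j \<noteq> {}" using thj(1) unfolding is_ribbon_def edge_connected_def by simp
    moreover have "finite (thetas ! j)" using thj(2) finK finite_subset by blast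
    ultimately show ?thesis using tail_in thj(2) by blast
  qed
  have pc: "content lam r (head (thetas ! i)) = p" unfolding p_def hash_p_def ..
  have qc: "content lam r (tail (thetas ! j)) = q" unfolding q_def hash_q_def ..
  define c0 where "c0 = min_content lam mu r"
  have "Min (content lam r ` skew lam mu) \<le> content lam r (head (thetas ! i))"
    by (rule Min_le) (use finK hu in auto)
  then have c0p: "c0 \<le> p" unfolding c0_def min_content_def pc .
  define up where "up = content_goes_up lam mu r thetas"
  define n0 where "n0 = nat (p - c0)"
  define n1 where "n1 = nat (q - c0)"
  have n01: "n0 \<le> n1" using pq c0p unfolding n0_def n1_def by simp
  have n1n0: "int n1 - int n0 = q - p" using pq c0p unfolding n0_def n1_def by simp
  have TH: "Theta_seg lam mu r thetas p q = strip_pos up c0 ` {n0..n1}"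
  proof -
    have "(\<lambda>c. nat (c - c0)) ` {p..q} = {n0..n1}"
    proof
      show "(\<lambda>c. nat (c - c0)) ` {p..q} \<subseteq> {n0..n1}" unfolding n0_def n1_def by auto
      show "{n0..n1} \<subseteq> (\<lambda>c. nat (c - c0)) ` {p..q}"
      proof
        fix n assume n: "n \<in> {n0..n1}"
        have "int n + c0 \<in> {p..q}" using n c0p pq unfolding n0_def n1_def by auto
        moreover have "n = nat (int n + c0 - c0)" by simp
        ultimately show "n \<in> (\<lambda>c. nat (c - c0)) ` {p..q}" by blast
      qed
    qed
    then have E: "{n0..n1} = (\<lambda>c. nat (c - c0)) ` {p..q}" by simp
    show ?thesis unfolding E image_image Theta_seg_def cut_cell_def up_def c0_def ..
  qed
  define S where "S = hash_cells lam mu r thetas i j"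
  have SN: "S = normalize (strip_pos up c0 ` {n0..n1})"
    unfolding S_def hash_cells_def p_def[symmetric] q_def[symmetric] TH ..
  have st: "stripish S" by (rule norm_strip(1)[OF n01 SN])
  have cs: "\<forall>z\<in>S. \<exists>n. n0 \<le> n \<and> n \<le> n1 \<and> int (snd z) - int (fst z) + int (shape_rows S) - 1 = int n - int n0"
    by (rule norm_strip(2)[OF n01 SN])
  have fin: "finite S" by (rule stripish_fin[OF st])
  have kc: "content (shape_kappa S) p z = int (snd z) - int (fst z) + int (shape_rows S) - 1 + p" for z
    unfolding content_def conj_kappa1[OF st] by simp
  have crange: "\<exists>w\<in>skew lam mu. content lam r w = content (shape_kappa S) p z" if zS: "z \<in> S" for z
  proof -
    obtain n where n: "n0 \<le> n" "n \<le> n1" "int (snd z) - int (fst z) + int (shape_rows S) - 1 = int n - int n0"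
      using bspec[OF cs zS] by auto
    have k: "content (shape_kappa S) p z = int n - int n0 + p" using n(3) kc[of z] by linarith
    have h1: "content lam r (head (thetas ! i)) \<le> content (shape_kappa S) p z"
      unfolding pc k using n(1) by simp
    have h2: "content (shape_kappa S) p z \<le> content lam r (tail (thetas ! j))"
      unfolding qc k using n(2) n1n0 by simp
    show ?thesis by (rule content_ivt[OF ec hu tv h1 h2])
  qed
  have main: "induced_a lam mu r thetas a i j t - induced_a lam mu r thetas a i j (t + 1)
               \<le> int (conj_part (shape_nu S) t) - int (conj_part (shape_nu S) (t + 1)) + 1
          \<and> induced_b lam mu r thetas b i j t - induced_b lam mu r thetas b i j (t + 1)
               \<le> int (conj_part (shape_kappa S) t) - int (conj_part (shape_kappa S) (t + 1)) + 1"
    if t: "1 \<le> t" "t < shape_cols S" for t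
  proof
    obtain x0 where x0: "(x0, t) \<in> S" using stripish_col[OF st, of t] t by auto
    obtain x1 where x1: "(x1, t + 1) \<in> S" using stripish_col[OF st, of "t+1"] t by auto
    define g0 where "g0 = Min {x. (x, t) \<in> S}"
    define g1 where "g1 = Min {x. (x, t + 1) \<in> S}"
    define d0 where "d0 = Max {x. (x, t) \<in> S}"
    define d1 where "d1 = Max {x. (x, t + 1) \<in> S}"
    have gm: "(g0, t) \<in> S" "(g1, t + 1) \<in> S" "(d0, t) \<in> S" "(d1, t + 1) \<in> S"
      unfolding g0_def g1_def d0_def d1_def using col_min(1)[OF fin x0] col_min(1)[OF fin x1]
        col_max(1)[OF fin x0] col_max(1)[OF fin x1] by auto
    have gpos: "1 \<le> g0" "1 \<le> g1" using stripish_pos[OF st gm(1)] stripish_pos[OF st gm(2)] by auto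
    have mono: "g1 \<le> g0" "d1 \<le> d0" using col_min_mono[OF st t(1)] t unfolding g0_def g1_def d0_def d1_def by auto
    have nu0: "conj_part (shape_nu S) t = g0 - 1" using conj_nu[OF st t(1)] t unfolding g0_def by simp
    have nu1: "conj_part (shape_nu S) (t + 1) = g1 - 1" using conj_nu[OF st, of "t+1"] t unfolding g1_def by simp
    have ka0: "conj_part (shape_kappa S) t = d0" using conj_kappa[OF st t(1)] t unfolding d0_def by simp
    have ka1: "conj_part (shape_kappa S) (t + 1) = d1" using conj_kappa[OF st, of "t+1"] t unfolding d1_def by simp
    obtain w0 where w0: "w0 \<in> skew lam mu" "content lam r w0 = content (shape_kappa S) p (g0, t)" using crange[OF gm(1)] by blast
    obtain w1 where w1: "w1 \<in> skew lam mu" "content lam r w1 = content (shape_kappa S) p (g1, t + 1)" using crange[OF gm(2)] by blast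
    obtain v0 where v0: "v0 \<in> skew lam mu" "content lam r v0 = content (shape_kappa S) p (d0, t)" using crange[OF gm(3)] by blast
    obtain v1 where v1: "v1 \<in> skew lam mu" "content lam r v1 = content (shape_kappa S) p (d1, t + 1)" using crange[OF gm(4)] by blast
    have cg: "content (shape_kappa S) p (g0, t) \<le> content (shape_kappa S) p (g1, t + 1)"
      using kc[of "(g0,t)"] kc[of "(g1,t+1)"] mono by simp
    have cd: "content (shape_kappa S) p (d0, t) \<le> content (shape_kappa S) p (d1, t + 1)"
      using kc[of "(d0,t)"] kc[of "(d1,t+1)"] mono by simp
    have A: "induced_a lam mu r thetas a i j t - induced_a lam mu r thetas a i j (t + 1)
         \<le> content (shape_kappa S) p (g1, t + 1) - content (shape_kappa S) p (g0, t)"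
      using lam_side_a[OF cr cf w0 w1 cg]
      unfolding induced_a_def Let_def S_def[symmetric] p_def[symmetric] g0_def g1_def by simp
    then show "induced_a lam mu r thetas a i j t - induced_a lam mu r thetas a i j (t + 1)
               \<le> int (conj_part (shape_nu S) t) - int (conj_part (shape_nu S) (t + 1)) + 1"
      using kc[of "(g0,t)"] kc[of "(g1,t+1)"] nu0 nu1 gpos by simp
    have B: "induced_b lam mu r thetas b i j t - induced_b lam mu r thetas b i j (t + 1)
         \<le> content (shape_kappa S) p (d1, t + 1) - content (shape_kappa S) p (d0, t)"
      using lam_side_b[OF cr cf v0 v1 cd]
      unfolding induced_b_def Let_def S_def[symmetric] p_def[symmetric] d0_def d1_def by simp
    then show "induced_b lam mu r thetas b i j t - induced_b lam mu r thetas b i j (t + 1)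
               \<le> int (conj_part (shape_kappa S) t) - int (conj_part (shape_kappa S) (t + 1)) + 1"
      using kc[of "(d0,t)"] kc[of "(d1,t+1)"] ka0 ka1 by simp
  qed
  have all: "\<forall>t. 1 \<le> t \<and> t < shape_cols S \<longrightarrow>
          induced_a lam mu r thetas a i j t - induced_a lam mu r thetas a i j (t + 1)
               \<le> int (conj_part (shape_nu S) t) - int (conj_part (shape_nu S) (t + 1)) + 1
          \<and> induced_b lam mu r thetas b i j t - induced_b lam mu r thetas b i j (t + 1)
               \<le> int (conj_part (shape_kappa S) t) - int (conj_part (shape_kappa S) (t + 1)) + 1"
  proof (intro allI impI)
    fix t assume "1 \<le> t \<and> t < shape_cols S"
    then show "induced_a lam mu r thetas a i j t - induced_a lam mu r thetas a i j (t + 1)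
               \<le> int (conj_part (shape_nu S) t) - int (conj_part (shape_nu S) (t + 1)) + 1
          \<and> induced_b lam mu r thetas b i j t - induced_b lam mu r thetas b i j (t + 1)
               \<le> int (conj_part (shape_kappa S) t) - int (conj_part (shape_kappa S) (t + 1)) + 1"
      using main[of t] by blast
  qed
  show ?thesis
    unfolding S_def[symmetric] column_flags_def
    using kappa1_le[OF st] all by auto
qed


end
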